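(* Let $k\geq 1$ be an integer. (i) Let $r=2k+1$ and let $1\leq i_1<i_2<\cdots<i_r$ be integers. Then \[ \int_{[0,1]^{i_r}}\frac{dx_1\cdots dx_{i_r}}{1-x_1\cdots x_{i_1}+x_1\cdots x_{i_2}-\cdots+(-1)^r x_1\cdots x_{i_r}} =\zeta^{\star}\big(i_1+1,\{1\}^{i_2-i_1-1},\,i_3-i_2+1,\{1\}^{i_4-i_3-1},\,\ldots,\,i_{2k-1}-i_{2k-2}+1,\{1\}^{i_{2k}-i_{2k-1}-1},\,i_{2k+1}-i_{2k}\big). \] (ii) Let $r=2k$ and let $1\leq i_1<i_2<\cdots<i_r$ be integers. Then \[ \int_{[0,1]^{i_r}}\frac{dx_1\cdots dx_{i_r}}{1-x_1\cdots x_{i_1}+x_1\cdots x_{i_2}-\cdots+(-1)^r x_1\cdots x_{i_r}} =\zeta^{\star}\big(i_1+1,\{1\}^{i_2-i_1-1},\,i_3-i_2+1,\{1\}^{i_4-i_3-1},\,\ldots,\,i_{2k-1}-i_{2k-2}+1,\{1\}^{i_{2k}-i_{2k-1}-1}\big). \] Here the denominator is $1+\sum_{j=1}^{r}(-1)^j\prod_{m=1}^{i_j}x_m$.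
   Context: For integers $k_1\geq 2$ and $k_2,\ldots,k_r\geq 1$, the multiple zeta-star value is $\zeta^{\star}(k_1,\ldots,k_r)=\sum_{n_1\geq n_2\geq\cdots\geq n_r\geq 1}\frac{1}{n_1^{k_1}\cdots n_r^{k_r}}$. The notation $\{1\}^{l}$ denotes $l$ consecutive arguments equal to $1$ (nothing if $l=0$). In the argument lists, the pattern "$i_{2j-1}-i_{2j-2}+1,\{1\}^{i_{2j}-i_{2j-1}-1}$" is repeated for $j=2,\ldots,k$ after the initial block $i_1+1,\{1\}^{i_2-i_1-1}$ (so e.g. for $k=1$ in (i) the list is $(i_1+1,\{1\}^{i_2-i_1-1},i_3-i_2)$). *)

theory Defs
  imports "HOL-Analysis.Analysis"
begin

definition zeta_star :: "nat list \<Rightarrow> real" where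
  "zeta_star ks = infsum (\<lambda>ns. \<Prod>j<length ks. 1 / real (ns ! j) ^ (ks ! j))
     {ns :: nat list. length ns = length ks \<and> sorted_wrt (\<ge>) ns \<and> (\<forall>n\<in>set ns. 1 \<le> n)}"

text \<open>The initial blocks of the argument list, for j = 1..k:
  i_{2j-1} - i_{2j-2} + 1, {1}^(i_{2j} - i_{2j-1} - 1), with the convention i_0 = 0.\<close>
definition zs_blocks :: "nat \<Rightarrow> (nat \<Rightarrow> nat) \<Rightarrow> nat list" where
  "zs_blocks k i = concat (map (\<lambda>j.
       (i (2*j-1) - (if 2*j-2 = 0 then 0 else i (2*j-2)) + 1)
       # replicate (i (2*j) - i (2*j-1) - 1) 1) [1..<k+1])"

text \<open>The integral over the unit cube [0,1]^n of x_1,...,x_n (coordinates x 0,...,x (n-1)),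
  with respect to Lebesgue measure, of the reciprocal of
  1 + sum_{j=1}^r (-1)^j x_1...x_{i_j}, where n = i_r.\<close>
definition cube_integral :: "nat \<Rightarrow> (nat \<Rightarrow> nat) \<Rightarrow> ennreal" where
  "cube_integral r i =
     (\<integral>\<^sup>+ x. ennreal (1 / (1 + (\<Sum>j=1..r. (-1) ^ j * (\<Prod>m<i j. x m))))
        \<partial>(PiM {..<i r} (\<lambda>_. restrict_space lborel {0..1::real})))"

end

theory Submission
  imports Defs
begin

lemma sf_MI: "sigma_finite_measure (restrict_space lborel {0..1::real})"
  by (rule sigma_finite_measure_restrict_space) (auto intro: lborel.sigma_finite_measure_axioms)

lemma PIsf: "product_sigma_finite (\<lambda>_::nat. restrict_space lborel {0..1::real})"
  unfolding product_sigma_finite_def using sf_MI by blast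

lemma int1_pow:
  fixes c :: real assumes "0 \<le> c"
  shows "(\<integral>\<^sup>+ y. ennreal ((y*c)^a) \<partial>restrict_space lborel {0..1::real}) = ennreal (c^a/(a+1))"
proof -
  have "((\<lambda>y. (y*c)^a) has_integral (c^a/(a+1))) {0..1::real}"
  proof -
    have "((\<lambda>y. (y*c)^a) has_integral (c^a/(a+1) * 1^(Suc a) - c^a/(a+1)*0^(Suc a))) {0..1::real}"
    proof (rule fundamental_theorem_of_calculus)
      fix y :: real
      have "((\<lambda>y. c^a/(a+1) * y^(Suc a)) has_real_derivative (c^a/(a+1) * (real (Suc a) * y^(Suc a - Suc 0)))) (at y within {0..1})"
        by (intro DERIV_cmult DERIV_pow)
      moreover have "c^a/(a+1) * (real (Suc a) * y^(Suc a - Suc 0)) = (y*c)^a"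
        by (simp add: power_mult_distrib field_simps)
      ultimately show "((\<lambda>y. c^a/(a+1) * y^(Suc a)) has_vector_derivative (y*c)^a) (at y within {0..1})"
        by (simp add: has_real_derivative_iff_has_vector_derivative)
    qed simp
    then show ?thesis by simp
  qed
  note hI = this
  then have "(\<integral>\<^sup>+ y. ennreal ((y*c)^a) * indicator {0..1} y \<partial>lborel) = ennreal (c^a/(a+1))"
    by (intro nn_integral_has_integral_lebesgue'[OF _ hI]) (use assms in auto)
  then show ?thesis
    by (subst nn_integral_restrict_space) auto
qed

lemma int1_geo:
  fixes c :: real assumes "0 \<le> c" "c \<le> 1"
  shows "(\<integral>\<^sup>+ y. ennreal ((1 - y*c)^a) \<partial>restrict_space lborel {0..1::real}) = ennreal ((\<Sum>j\<le>a. (1-c)^j)/(a+1))"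
proof -
  have geo: "(\<Sum>j\<le>a. (1-c)^j) * c = 1 - (1-c)^(a+1)"
  proof (induction a)
    case 0 then show ?case by simp
  next
    case (Suc a) then show ?case by (simp add: algebra_simps)
  qed
  have "((\<lambda>y. (1 - y*c)^a) has_integral ((\<Sum>j\<le>a. (1-c)^j)/(a+1))) {0..1::real}"
  proof (cases "c = 0")
    case True
    then show ?thesis using has_integral_const_real[of "1::real" 0 1] by simp
  next
    case False
    define F where "F = (\<lambda>y::real. (-1/(c*(a+1))) * (1 - y*c)^(Suc a))"
    have "((\<lambda>y. (1 - y*c)^a) has_integral (F 1 - F 0)) {0..1::real}"
    proof (rule fundamental_theorem_of_calculus)
      fix y :: real
      have "((\<lambda>y. (-1/(c*(a+1))) * (1 - y*c)^(Suc a)) has_real_derivative ((-1/(c*(a+1))) * (of_nat (Suc a) * ((0 - (1*c)) * (1-y*c)^(Suc a - Suc 0))))) (at y within {0..1})"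
        by (intro DERIV_cmult DERIV_power DERIV_diff DERIV_const DERIV_cmult_right DERIV_ident)
      moreover have "((-1/(c*(a+1))) * (of_nat (Suc a) * ((0 - (1*c)) * (1-y*c)^(Suc a - Suc 0)))) = (1-y*c)^a"
      proof -
        have h: "c + c * real a \<noteq> 0" using False assms by (smt (verit) mult_nonneg_nonneg of_nat_0_le_iff)
        show ?thesis using h False by (simp add: field_simps)
      qed
      ultimately show "(F has_vector_derivative (1-y*c)^a) (at y within {0..1})"
        by (simp add: has_real_derivative_iff_has_vector_derivative F_def)
    qed simp
    moreover have "F 1 - F 0 = (\<Sum>j\<le>a. (1-c)^j)/(a+1)"
    proof -
      have "F 1 - F 0 = (1 - (1-c)^(a+1)) / (c*(a+1))"
        by (simp add: F_def diff_divide_distrib)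
      also have "\<dots> = ((\<Sum>j\<le>a. (1-c)^j) * c) / (c*(a+1))" by (simp only: geo)
      also have "\<dots> = (\<Sum>j\<le>a. (1-c)^j)/(a+1)" using False by simp
      finally show ?thesis .
    qed
    ultimately show ?thesis by simp
  qed
  note hI = this
  then have "(\<integral>\<^sup>+ y. ennreal ((1 - y*c)^a) * indicator {0..1} y \<partial>lborel) = ennreal ((\<Sum>j\<le>a. (1-c)^j)/(a+1))"
    by (intro nn_integral_has_integral_lebesgue'[OF _ hI]) (use assms in \<open>auto intro!: zero_le_power simp: mult_le_one\<close>)
  then show ?thesis
    by (subst nn_integral_restrict_space) auto
qed

function Qf :: "nat set \<Rightarrow> nat \<Rightarrow> nat \<Rightarrow> (nat \<Rightarrow> real) \<Rightarrow> real" where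
  "Qf B n m x = (if m < n then (if m \<in> B then 1 - x m * Qf B n (Suc m) x else x m * Qf B n (Suc m) x) else 1)"
  by auto
termination by (relation "Wellfounded.measure (\<lambda>(B,n,m,x). n - m)") auto

declare Qf.simps[simp del]

definition Pm :: "nat set \<Rightarrow> nat \<Rightarrow> bool \<Rightarrow> nat \<Rightarrow> (nat \<Rightarrow> real) \<Rightarrow> real" where
  "Pm B n s m x = (if s then Qf B n m x else 1 - Qf B n m x)"

function fe :: "nat set \<Rightarrow> nat \<Rightarrow> nat \<Rightarrow> bool \<Rightarrow> nat \<Rightarrow> real" where
  "fe B n m s a = (if m < n then (if s = (m \<notin> B) then fe B n (Suc m) True a / (a+1)
      else (\<Sum>c\<le>a. fe B n (Suc m) False c) / (a+1))
    else (if s then 1 else (if a = 0 then 1 else 0)))"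
  by auto
termination by (relation "Wellfounded.measure (\<lambda>(B,n,m,s,a). n - m)") auto

declare fe.simps[simp del]

lemma fe_nonneg: "fe B n m s a \<ge> 0"
proof (induction "n - m" arbitrary: m s a)
  case 0
  then show ?case by (simp add: fe.simps[of B n m])
next
  case (Suc d)
  then have mn: "m < n" by simp
  have IH: "\<And>s a. fe B n (Suc m) s a \<ge> 0" using Suc by auto
  show ?case using mn IH by (simp add: fe.simps[of B n m] sum_nonneg)
qed

lemma Qf_upd: "j < m \<Longrightarrow> Qf B n m (x(j:=y)) = Qf B n m x"
proof (induction "n - m" arbitrary: m)
  case 0
  then show ?case by (simp add: Qf.simps[of B n m])
next
  case (Suc d)
  then have mn: "m < n" by simp
  have IH: "Qf B n (Suc m) (x(j:=y)) = Qf B n (Suc m) x" using Suc by auto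
  show ?case using mn IH Suc.prems by (simp add: Qf.simps[of B n m])
qed

lemma Qf_range: "(\<And>j. m \<le> j \<Longrightarrow> j < n \<Longrightarrow> 0 \<le> x j \<and> x j \<le> 1) \<Longrightarrow> 0 \<le> Qf B n m x \<and> Qf B n m x \<le> 1"
proof (induction "n - m" arbitrary: m)
  case 0
  then show ?case by (simp add: Qf.simps[of B n m])
next
  case (Suc d)
  then have mn: "m < n" by simp
  have IH: "0 \<le> Qf B n (Suc m) x \<and> Qf B n (Suc m) x \<le> 1"
    using Suc.hyps(1)[of "Suc m"] Suc.hyps(2) Suc.prems by auto
  have xm: "0 \<le> x m \<and> x m \<le> 1" using Suc.prems mn by auto
  have "0 \<le> x m * Qf B n (Suc m) x \<and> x m * Qf B n (Suc m) x \<le> 1"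
    using IH xm by (auto intro: mult_le_one)
  then show ?case using mn by (simp add: Qf.simps[of B n m])
qed

lemma Pm_range: "(\<And>j. m \<le> j \<Longrightarrow> j < n \<Longrightarrow> 0 \<le> x j \<and> x j \<le> 1) \<Longrightarrow> 0 \<le> Pm B n s m x \<and> Pm B n s m x \<le> 1"
  using Qf_range[of m n x B] by (auto simp: Pm_def)

lemma Pm_step: "m < n \<Longrightarrow> Pm B n s m x = (if s = (m \<notin> B) then x m * Pm B n True (Suc m) x
   else 1 - x m * (1 - Pm B n False (Suc m) x))"
  unfolding Pm_def by (simp add: Qf.simps[of B n m])

lemma Pm_upd: "j < m \<Longrightarrow> Pm B n s m (x(j:=y)) = Pm B n s m x"
  unfolding Pm_def by (simp add: Qf_upd)

abbreviation "MI \<equiv> restrict_space lborel {0..1::real}"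

lemma comp_meas: "m \<in> I \<Longrightarrow> (\<lambda>x. x m) \<in> borel_measurable (PiM I (\<lambda>_. MI))"
proof -
  assume "m \<in> I"
  then have "(\<lambda>x. x m) \<in> PiM I (\<lambda>_. MI) \<rightarrow>\<^sub>M MI" by (rule measurable_component_singleton)
  moreover have "(\<lambda>x. x) \<in> MI \<rightarrow>\<^sub>M (borel :: real measure)"
    by (rule measurable_restrict_space1) simp
  ultimately have "(\<lambda>x::real. x) \<circ> (\<lambda>x. x m) \<in> borel_measurable (PiM I (\<lambda>_. MI))"
    by (rule measurable_comp)
  then show ?thesis by (simp add: comp_def)
qed

lemma Qf_meas: "{m..<n} \<subseteq> I \<Longrightarrow> Qf B n m \<in> borel_measurable (PiM I (\<lambda>_. MI))"
proof (induction "n - m" arbitrary: m)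
  case 0
  then have "Qf B n m = (\<lambda>x. 1)" by (auto simp: Qf.simps[of B n m])
  then show ?case by simp
next
  case (Suc d)
  then have mn: "m < n" by simp
  have d1: "d = n - Suc m" using Suc.hyps(2) by arith
  have s1: "{Suc m..<n} \<subseteq> I" using Suc.prems by auto
  have IH: "Qf B n (Suc m) \<in> borel_measurable (PiM I (\<lambda>_. MI))" using Suc.hyps(1)[OF d1 s1] .
  have cm: "(\<lambda>x. x m) \<in> borel_measurable (PiM I (\<lambda>_. MI))" using Suc mn by (intro comp_meas) auto
  have "Qf B n m = (\<lambda>x. if m \<in> B then 1 - x m * Qf B n (Suc m) x else x m * Qf B n (Suc m) x)"
    using mn by (auto simp: Qf.simps[of B n m])
  moreover have "(\<lambda>x. x m * Qf B n (Suc m) x) \<in> borel_measurable (PiM I (\<lambda>_. MI))"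
    by (rule borel_measurable_times[OF cm IH])
  moreover have "(\<lambda>x. 1 - x m * Qf B n (Suc m) x) \<in> borel_measurable (PiM I (\<lambda>_. MI))"
    by (rule borel_measurable_diff[OF borel_measurable_const borel_measurable_times[OF cm IH]])
  ultimately show ?case by (cases "m \<in> B") simp_all
qed

lemma Pm_meas: "{m..<n} \<subseteq> I \<Longrightarrow> Pm B n s m \<in> borel_measurable (PiM I (\<lambda>_. MI))"
  unfolding Pm_def using Qf_meas[of m n I B] by (cases s) auto

lemma space_MI: "space MI = {0..1}" by (simp add: space_restrict_space)

lemma space_PiMI: "x \<in> space (PiM I (\<lambda>_. MI)) \<Longrightarrow> j \<in> I \<Longrightarrow> 0 \<le> x j \<and> x j \<le> 1"
  by (auto simp: space_PiM space_MI PiE_def Pi_def)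

lemma Pm_pow_meas: "{m..<n} \<subseteq> I \<Longrightarrow> (\<lambda>x. ennreal (Pm B n s m x ^ a)) \<in> borel_measurable (PiM I (\<lambda>_. MI))"
proof -
  assume h: "{m..<n} \<subseteq> I"
  have "(\<lambda>x. Pm B n s m x ^ a) \<in> borel_measurable (PiM I (\<lambda>_. MI))"
    by (rule borel_measurable_power[OF Pm_meas[OF h]])
  then show ?thesis by (rule measurable_compose[OF _ measurable_ennreal])
qed

lemma Pm_integral:
  "m \<le> n \<Longrightarrow> (\<integral>\<^sup>+x. ennreal (Pm B n s m x ^ a) \<partial>PiM {m..<n} (\<lambda>_. MI)) = ennreal (fe B n m s a)"
proof (induction "n - m" arbitrary: m s a)
  case 0
  then have mn: "m = n" by simp
  have "Pm B n s n x = (if s then 1 else 0)" for x by (simp add: Pm_def Qf.simps[of B n n])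
  then show ?case using mn
    by (simp add: PiM_empty nn_integral_count_space_finite fe.simps[of B n n])
next
  case (Suc d)
  then have mn: "m < n" by simp
  have d1: "d = n - Suc m" using Suc.hyps(2) by arith
  have IH: "\<And>s a. (\<integral>\<^sup>+x. ennreal (Pm B n s (Suc m) x ^ a) \<partial>PiM {Suc m..<n} (\<lambda>_. MI)) = ennreal (fe B n (Suc m) s a)"
    using Suc.hyps(1)[OF d1] mn by auto
  define I where "I = {Suc m..<n}"
  have ins: "insert m I = {m..<n}" using mn by (auto simp: I_def)
  have fI: "finite I" "m \<notin> I" by (auto simp: I_def)
  have meas: "(\<lambda>x. ennreal (Pm B n s m x ^ a)) \<in> borel_measurable (PiM (insert m I) (\<lambda>_. MI))"
    by (rule Pm_pow_meas) (simp add: ins)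
  have step: "(\<integral>\<^sup>+x. ennreal (Pm B n s m x ^ a) \<partial>PiM {m..<n} (\<lambda>_. MI))
     = (\<integral>\<^sup>+x. (\<integral>\<^sup>+y. ennreal (Pm B n s m (x(m:=y)) ^ a) \<partial>MI) \<partial>PiM I (\<lambda>_. MI))"
    using product_sigma_finite.product_nn_integral_insert[OF PIsf fI meas] by (simp add: ins)
  have upd: "Pm B n s m (x(m:=y)) = (if s = (m \<notin> B) then y * Pm B n True (Suc m) x
      else 1 - y * (1 - Pm B n False (Suc m) x))" for x y
    using mn by (simp add: Pm_step Pm_upd)
  have rng: "\<And>s x. x \<in> space (PiM I (\<lambda>_. MI)) \<Longrightarrow> 0 \<le> Pm B n s (Suc m) x \<and> Pm B n s (Suc m) x \<le> 1"
    by (rule Pm_range) (auto simp: I_def dest: space_PiMI)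
  have measI: "\<And>s a. (\<lambda>x. ennreal (Pm B n s (Suc m) x ^ a)) \<in> borel_measurable (PiM I (\<lambda>_. MI))"
    by (rule Pm_pow_meas) (simp add: I_def)
  show ?case
  proof (cases "s = (m \<notin> B)")
    case True
    have "(\<integral>\<^sup>+x. (\<integral>\<^sup>+y. ennreal (Pm B n s m (x(m:=y)) ^ a) \<partial>MI) \<partial>PiM I (\<lambda>_. MI))
        = (\<integral>\<^sup>+x. ennreal (1/(a+1)) * ennreal (Pm B n True (Suc m) x ^ a) \<partial>PiM I (\<lambda>_. MI))"
    proof (rule nn_integral_cong)
      fix x assume x: "x \<in> space (PiM I (\<lambda>_. MI))"
      have "(\<integral>\<^sup>+y. ennreal (Pm B n s m (x(m:=y)) ^ a) \<partial>MI) = (\<integral>\<^sup>+y. ennreal ((y * Pm B n True (Suc m) x) ^ a) \<partial>MI)"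
        unfolding upd using True by simp
      also have "\<dots> = ennreal (Pm B n True (Suc m) x ^ a / (a+1))"
        using rng[OF x] by (intro int1_pow) auto
      also have "\<dots> = ennreal (1/(a+1)) * ennreal (Pm B n True (Suc m) x ^ a)"
        by (subst ennreal_mult'[symmetric]) auto
      finally show "(\<integral>\<^sup>+y. ennreal (Pm B n s m (x(m:=y)) ^ a) \<partial>MI) = ennreal (1/(a+1)) * ennreal (Pm B n True (Suc m) x ^ a)" .
    qed
    also have "\<dots> = ennreal (1/(a+1)) * ennreal (fe B n (Suc m) True a)"
      by (subst nn_integral_cmult[OF measI]) (simp add: IH[unfolded I_def[symmetric]])
    also have "\<dots> = ennreal (fe B n m s a)"
      using True mn by (simp add: fe.simps[of B n m] ennreal_mult'[symmetric] fe_nonneg)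
    finally show ?thesis using step by simp
  next
    case False
    have "(\<integral>\<^sup>+x. (\<integral>\<^sup>+y. ennreal (Pm B n s m (x(m:=y)) ^ a) \<partial>MI) \<partial>PiM I (\<lambda>_. MI))
        = (\<integral>\<^sup>+x. ennreal (1/(a+1)) * (\<Sum>j\<le>a. ennreal (Pm B n False (Suc m) x ^ j)) \<partial>PiM I (\<lambda>_. MI))"
    proof (rule nn_integral_cong)
      fix x assume x: "x \<in> space (PiM I (\<lambda>_. MI))"
      have r: "0 \<le> Pm B n False (Suc m) x \<and> Pm B n False (Suc m) x \<le> 1" using rng[OF x] .
      have "(\<integral>\<^sup>+y. ennreal (Pm B n s m (x(m:=y)) ^ a) \<partial>MI) = (\<integral>\<^sup>+y. ennreal ((1 - y * (1 - Pm B n False (Suc m) x)) ^ a) \<partial>MI)"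
        unfolding upd using False by simp
      also have "\<dots> = ennreal ((\<Sum>j\<le>a. (1 - (1 - Pm B n False (Suc m) x))^j)/(a+1))"
        using r by (intro int1_geo) auto
      also have "\<dots> = ennreal (1/(a+1)) * (\<Sum>j\<le>a. ennreal (Pm B n False (Suc m) x ^ j))"
        using r by (subst sum_ennreal) (auto simp: ennreal_mult'[symmetric])
      finally show "(\<integral>\<^sup>+y. ennreal (Pm B n s m (x(m:=y)) ^ a) \<partial>MI) = ennreal (1/(a+1)) * (\<Sum>j\<le>a. ennreal (Pm B n False (Suc m) x ^ j))" .
    qed
    also have "\<dots> = ennreal (1/(a+1)) * (\<Sum>j\<le>a. ennreal (fe B n (Suc m) False j))"
    proof -
      have ms: "(\<lambda>x. \<Sum>j\<le>a. ennreal (Pm B n False (Suc m) x ^ j)) \<in> borel_measurable (PiM I (\<lambda>_. MI))"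
        by (rule borel_measurable_sum) (rule measI)
      have "(\<integral>\<^sup>+x. (\<Sum>j\<le>a. ennreal (Pm B n False (Suc m) x ^ j)) \<partial>PiM I (\<lambda>_. MI)) = (\<Sum>j\<le>a. ennreal (fe B n (Suc m) False j))"
        by (subst nn_integral_sum) (auto intro: measI simp: IH[unfolded I_def[symmetric]])
      then show ?thesis by (subst nn_integral_cmult[OF ms]) simp
    qed
    also have "\<dots> = ennreal (fe B n m s a)"
      using False mn by (simp add: fe.simps[of B n m] ennreal_mult'[symmetric] fe_nonneg sum_nonneg)
    finally show ?thesis using step by simp
  qed
qed

lemma strict_ii:
  fixes ii :: "nat \<Rightarrow> nat"
  assumes st: "\<And>j. j < r \<Longrightarrow> ii j < ii (Suc j)"
  shows "l1 < l2 \<Longrightarrow> l2 \<le> r \<Longrightarrow> ii l1 < ii l2"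
proof (induction l2)
  case 0 then show ?case by simp
next
  case (Suc l2)
  show ?case
  proof (cases "l1 = l2")
    case True then show ?thesis using st Suc.prems by auto
  next
    case False
    then have "ii l1 < ii l2" using Suc by auto
    also have "ii l2 < ii (Suc l2)" using st Suc.prems by auto
    finally show ?thesis .
  qed
qed

lemma notin_B:
  fixes ii :: "nat \<Rightarrow> nat"
  assumes st: "\<And>j. j < r \<Longrightarrow> ii j < ii (Suc j)" and l: "l < r"
    and p: "ii l < p" "p < ii (Suc l)"
  shows "p \<notin> ii ` {..<r}"
proof
  assume "p \<in> ii ` {..<r}"
  then obtain l' where l': "l' < r" "p = ii l'" by auto
  have "\<not> l' \<le> l"
  proof
    assume "l' \<le> l"
    then have "ii l' \<le> ii l" using strict_ii[where ii=ii and r=r, OF st, of l' l] l by (cases "l' = l") auto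
    then show False using p l' by simp
  qed
  moreover have "\<not> Suc l \<le> l'"
  proof
    assume "Suc l \<le> l'"
    then have "ii (Suc l) \<le> ii l'" using strict_ii[where ii=ii and r=r, OF st, of "Suc l" l'] l' by (cases "Suc l = l'") auto
    then show False using p l' by simp
  qed
  ultimately show False by simp
qed

lemma Alg1:
  fixes ii :: "nat \<Rightarrow> nat"
  assumes st: "\<And>j. j < r \<Longrightarrow> ii j < ii (Suc j)" and l: "l < r" and nr: "n = ii r"
  shows "ii l < p \<Longrightarrow> p \<le> ii (Suc l) \<Longrightarrow>
    Qf (ii ` {..<r}) n p x = (\<Prod>m\<in>{p..<ii (Suc l)}. x m) * Qf (ii ` {..<r}) n (ii (Suc l)) x"
proof (induction "ii (Suc l) - p" arbitrary: p)
  case 0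
  then show ?case by simp
next
  case (Suc d)
  then have p1: "p < ii (Suc l)" by simp
  have "ii (Suc l) \<le> n" using strict_ii[where ii=ii and r=r, OF st, of "Suc l" r] l nr by (cases "Suc l = r") auto
  then have pn: "p < n" using p1 by simp
  have nB: "p \<notin> ii ` {..<r}" using notin_B[where ii=ii and r=r, OF st l] Suc.prems p1 by simp
  have IH: "Qf (ii ` {..<r}) n (Suc p) x = (\<Prod>m\<in>{Suc p..<ii (Suc l)}. x m) * Qf (ii ` {..<r}) n (ii (Suc l)) x"
    using Suc.hyps(1)[of "Suc p"] Suc.hyps(2) Suc.prems p1 by simp
  show ?case using pn nB IH p1 by (simp add: Qf.simps[of _ n p] prod.atLeast_Suc_lessThan)
qed

lemma Alg2:
  fixes ii :: "nat \<Rightarrow> nat"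
  assumes st: "\<And>j. j < r \<Longrightarrow> ii j < ii (Suc j)" and nr: "n = ii r"
  shows "l \<le> r \<Longrightarrow> (\<Sum>j\<in>{l..r}. (-1)^j * (\<Prod>m<ii j. x m))
     = (-1)^l * (\<Prod>m<ii l. x m) * Qf (ii ` {..<r}) n (ii l) x"
proof (induction "r - l" arbitrary: l)
  case 0
  then have "l = r" by simp
  moreover have "Qf (ii ` {..<r}) n n x = 1" by (simp add: Qf.simps[of "ii ` {..<r}" n n])
  ultimately show ?case using nr by simp
next
  case (Suc d)
  then have lr: "l < r" by simp
  define B where "B = ii ` {..<r}"
  have IH: "(\<Sum>j\<in>{Suc l..r}. (-1)^j * (\<Prod>m<ii j. x m))
     = (-1)^(Suc l) * (\<Prod>m<ii (Suc l). x m) * Qf B n (ii (Suc l)) x"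
    using Suc.hyps(1)[of "Suc l"] Suc.hyps(2) lr by (simp add: B_def)
  have lt: "ii l < ii (Suc l)" using st lr by simp
  have iln: "ii l < n" using strict_ii[where ii=ii and r=r, OF st, of l r] lr nr by simp
  have inB: "ii l \<in> B" using lr by (simp add: B_def)
  have q1: "Qf B n (Suc (ii l)) x = (\<Prod>m\<in>{Suc (ii l)..<ii (Suc l)}. x m) * Qf B n (ii (Suc l)) x"
    unfolding B_def by (rule Alg1[where ii=ii and r=r, OF st lr nr]) (use lt in auto)
  have q0: "Qf B n (ii l) x = 1 - x (ii l) * Qf B n (Suc (ii l)) x"
    using iln inB by (simp add: Qf.simps[of B n "ii l"])
  have pr: "(\<Prod>m<ii (Suc l). x m) = (\<Prod>m<ii l. x m) * (x (ii l) * (\<Prod>m\<in>{Suc (ii l)..<ii (Suc l)}. x m))"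
  proof -
    have "(\<Prod>m<ii (Suc l). x m) = (\<Prod>m\<in>{0..<ii l}. x m) * (\<Prod>m\<in>{ii l..<ii (Suc l)}. x m)"
      using lt by (simp add: atLeast0LessThan[symmetric] prod.atLeastLessThan_concat)
    then show ?thesis using lt by (simp add: atLeast0LessThan prod.atLeast_Suc_lessThan)
  qed
  have "(\<Sum>j\<in>{l..r}. (-1)^j * (\<Prod>m<ii j. x m)) = (-1)^l * (\<Prod>m<ii l. x m) + (\<Sum>j\<in>{Suc l..r}. (-1)^j * (\<Prod>m<ii j. x m))"
    using lr by (simp add: sum.atLeast_Suc_atMost)
  also have "\<dots> = (-1)^l * (\<Prod>m<ii l. x m) * Qf B n (ii l) x"
    unfolding IH q0 q1 pr by (simp add: algebra_simps)
  finally show ?case by (simp add: B_def)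
qed

lemma geo_pt:
  fixes q :: real
  assumes "0 \<le> q" "q \<le> 1" "(\<Sum>a. ennreal ((1-q)^a)) \<noteq> \<infinity>"
  shows "ennreal (1/q) = (\<Sum>a. ennreal ((1-q)^a))"
proof (cases "q = 0")
  case True
  have "\<not> summable (\<lambda>a::nat. (1::real))"
    by (simp add: summable_const_iff)
  then have "(\<Sum>a. ennreal ((1-q)^a)) = top"
    using True summable_iff_suminf_neq_top[of "\<lambda>a. (1::real)"] by simp
  then show ?thesis using assms(3) by simp
next
  case False
  then have q: "0 < q" using assms(1) by simp
  have n1: "norm (1-q) < 1" using q assms(2) by simp
  have e: "1 / (1 - (1-q)) = 1/q" by simp
  have s: "(\<lambda>a. (1-q)^a) sums (1/q)"
    using geometric_sums[OF n1] unfolding e .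
  have nn: "\<And>a. 0 \<le> (1-q)^a" using assms(2) by simp
  have "(\<Sum>a. ennreal ((1-q)^a)) = ennreal (\<Sum>a. (1-q)^a)"
    by (rule suminf_ennreal2[OF nn sums_summable[OF s]])
  moreover have "(\<Sum>a. (1-q)^a) = 1/q" using s by (rule sums_unique[symmetric])
  ultimately show ?thesis by simp
qed

lemma cube_series:
  fixes i :: "nat \<Rightarrow> nat" and r :: nat
  assumes r1: "1 \<le> r" and i1: "1 \<le> i 1" and inc: "\<forall>j\<in>{1..<r}. i j < i (Suc j)"
    and fin: "(\<Sum>a. ennreal (fe ((\<lambda>j. if j = 0 then 0 else i j) ` {..<r}) (i r) 0 False a)) \<noteq> \<infinity>"
  shows "cube_integral r i = (\<Sum>a. ennreal (fe ((\<lambda>j. if j = 0 then 0 else i j) ` {..<r}) (i r) 0 False a))"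
proof -
  define ii where "ii = (\<lambda>j. if j = 0 then 0 else i j)"
  define n where "n = i r"
  define B where "B = ii ` {..<r}"
  have st: "\<And>j. j < r \<Longrightarrow> ii j < ii (Suc j)"
    using i1 inc by (auto simp: ii_def)
  have nr: "n = ii r" using r1 by (simp add: ii_def n_def)
  have D: "1 + (\<Sum>j=1..r. (-1) ^ j * (\<Prod>m<i j. x m)) = Qf B n 0 x" for x :: "nat \<Rightarrow> real"
  proof -
    have "(\<Sum>j\<in>{0..r}. (-1)^j * (\<Prod>m<ii j. x m)) = (-1)^0 * (\<Prod>m<ii 0. x m) * Qf B n (ii 0) x"
      unfolding B_def by (rule Alg2[where ii=ii and r=r, OF st nr le0])
    moreover have "(\<Sum>j\<in>{0..r}. (-1)^j * (\<Prod>m<ii j. x m)) = 1 + (\<Sum>j=1..r. (-1) ^ j * (\<Prod>m<i j. x m))"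
      by (simp add: sum.atLeast_Suc_atMost ii_def)
    ultimately show ?thesis by (simp add: ii_def)
  qed
  define M where "M = PiM {..<n} (\<lambda>_. MI)"
  have sp: "x \<in> space M \<Longrightarrow> 0 \<le> Qf B n 0 x \<and> Qf B n 0 x \<le> 1" for x
    by (rule Qf_range) (auto simp: M_def dest: space_PiMI)
  have Mdef: "M = PiM {0..<n} (\<lambda>_. MI)" by (simp add: M_def atLeast0LessThan)
  have meas: "\<And>a. (\<lambda>x. ennreal (Pm B n False 0 x ^ a)) \<in> borel_measurable M"
    unfolding Mdef by (rule Pm_pow_meas) simp
  have ints: "(\<integral>\<^sup>+x. (\<Sum>a. ennreal (Pm B n False 0 x ^ a)) \<partial>M) = (\<Sum>a. ennreal (fe B n 0 False a))"
    by (subst nn_integral_suminf[OF meas]) (simp add: Mdef Pm_integral)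
  have measG: "(\<lambda>x. \<Sum>a. ennreal (Pm B n False 0 x ^ a)) \<in> borel_measurable M"
    by (rule borel_measurable_suminf_order[OF meas])
  have fin': "(\<integral>\<^sup>+x. (\<Sum>a. ennreal (Pm B n False 0 x ^ a)) \<partial>M) \<noteq> \<infinity>"
  proof -
    have fin0: "(\<Sum>a. ennreal (fe B n 0 False a)) \<noteq> \<infinity>"
      using fin unfolding B_def ii_def n_def .
    then show ?thesis unfolding ints .
  qed
  have "AE x in M. (\<Sum>a. ennreal (Pm B n False 0 x ^ a)) \<noteq> \<infinity>"
    by (rule nn_integral_PInf_AE[OF measG fin'])
  then have ae: "AE x in M. ennreal (1 / Qf B n 0 x) = (\<Sum>a. ennreal (Pm B n False 0 x ^ a))"
    using AE_space
  proof eventually_elim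
    case (elim x)
    have PF: "\<And>y. Pm B n False 0 y = 1 - Qf B n 0 y" by (simp add: Pm_def)
    have h: "(\<Sum>a. ennreal ((1 - Qf B n 0 x)^a)) \<noteq> \<infinity>" using elim(1) unfolding PF .
    from sp[OF elim(2)] have a1: "0 \<le> Qf B n 0 x" and a2: "Qf B n 0 x \<le> 1" by auto
    show ?case unfolding PF by (rule geo_pt[OF a1 a2 h])
  qed
  have "cube_integral r i = (\<integral>\<^sup>+x. ennreal (1 / Qf B n 0 x) \<partial>M)"
    unfolding cube_integral_def M_def D n_def ..
  also have "\<dots> = (\<integral>\<^sup>+x. (\<Sum>a. ennreal (Pm B n False 0 x ^ a)) \<partial>M)"
    by (rule nn_integral_cong_AE[OF ae])
  also have "\<dots> = (\<Sum>a. ennreal (fe B n 0 False a))" by (rule ints)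
  finally show ?thesis by (simp add: B_def ii_def n_def)
qed

fun Zr :: "nat list \<Rightarrow> nat \<Rightarrow> real" where
  "Zr [] a = 1"
| "Zr (k#ks) a = (\<Sum>c\<le>a. (1 / (real c + 1) ^ k) * Zr ks c)"

definition Sm :: "nat set \<Rightarrow> nat \<Rightarrow> nat \<Rightarrow> nat \<Rightarrow> real" where
  "Sm B n t a = (\<Sum>c\<le>a. fe B n t False c)"

lemma fe_keep_chain:
  assumes "q \<le> n" "\<forall>t. p < t \<and> t < q \<longrightarrow> t \<notin> B"
  shows "p < t \<Longrightarrow> t \<le> q \<Longrightarrow> fe B n t True a = fe B n q True a / (real a + 1)^(q-t)"
proof (induction "q - t" arbitrary: t)
  case 0
  then show ?case by simp
next
  case (Suc d)
  then have tq: "t < q" by simp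
  have IH: "fe B n (Suc t) True a = fe B n q True a / (real a + 1)^(q - Suc t)"
    using Suc.hyps(1)[of "Suc t"] Suc.hyps(2) Suc.prems tq by simp
  have tn: "t < n" using tq assms(1) by simp
  have tB: "t \<notin> B" using assms(2) Suc.prems tq by auto
  have qt: "q - t = Suc (q - Suc t)" using tq by simp
  show ?case using tn tB by (simp add: fe.simps[of B n t] qt IH divide_divide_eq_left mult.commute)
qed

lemma fe_keep_seg:
  assumes "p \<in> B" "p < q" "q \<le> n" "\<forall>t. p < t \<and> t < q \<longrightarrow> t \<notin> B"
  shows "fe B n p False a = fe B n q True a / (real a + 1)^(q-p)"
proof -
  have c: "fe B n (Suc p) True a = fe B n q True a / (real a + 1)^(q - Suc p)"
    using fe_keep_chain[OF assms(3,4), of "Suc p"] assms(2) by simp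
  have qt: "q - p = Suc (q - Suc p)" using assms(2) by simp
  show ?thesis using assms(1,2,3) by (simp add: fe.simps[of B n p] qt c divide_divide_eq_left mult.commute)
qed

lemma fe_drop_step:
  assumes "t < n" "(t \<in> B \<and> s) \<or> (t \<notin> B \<and> \<not> s)"
  shows "fe B n t s a = Sm B n (Suc t) a / (real a + 1)"
  using assms by (auto simp: fe.simps[of B n t] Sm_def)

lemma drop_chain:
  assumes "q \<le> n" "\<forall>t. p < t \<and> t < q \<longrightarrow> t \<notin> B" "\<And>a. Sm B n q a = Zr ts a"
  shows "p < t \<Longrightarrow> t \<le> q \<Longrightarrow> Sm B n t a = Zr (replicate (q-t) 1 @ ts) a"
proof (induction "q - t" arbitrary: t a)
  case 0
  then show ?case using assms(3) by simp
next
  case (Suc d)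
  then have tq: "t < q" by simp
  have IH: "\<And>a. Sm B n (Suc t) a = Zr (replicate (q - Suc t) 1 @ ts) a"
    using Suc.hyps(1)[of "Suc t"] Suc.hyps(2) Suc.prems tq by simp
  have tn: "t < n" using tq assms(1) by simp
  have tB: "t \<notin> B" using assms(2) Suc.prems tq by auto
  have qt: "q - t = Suc (q - Suc t)" using tq by simp
  have "Sm B n t a = (\<Sum>c\<le>a. Sm B n (Suc t) c / (real c + 1))"
    unfolding Sm_def[of B n t] using tn tB by (intro sum.cong refl) (simp add: fe_drop_step Sm_def)
  also have "\<dots> = Zr (replicate (q-t) 1 @ ts) a"
    by (simp add: qt IH)
  finally show ?case .
qed

lemma pair_seg:
  assumes B0: "P0 \<in> B" and B1: "P1 \<in> B" and lt: "P0 < P1" "P1 < P2" "P2 \<le> n"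
    and nB0: "\<forall>t. P0 < t \<and> t < P1 \<longrightarrow> t \<notin> B" and nB1: "\<forall>t. P1 < t \<and> t < P2 \<longrightarrow> t \<notin> B"
    and h: "\<And>a. Sm B n P2 a = Zr ts a"
  shows "Sm B n P0 a = Zr ((P1 - P0 + 1) # replicate (P2 - P1 - 1) 1 @ ts) a"
proof -
  have ch: "\<And>c. Sm B n (Suc P1) c = Zr (replicate (P2 - Suc P1) 1 @ ts) c"
    using drop_chain[OF lt(3) nB1 h, of "Suc P1"] lt by simp
  have f0: "fe B n P0 False c = Zr (replicate (P2 - P1 - 1) 1 @ ts) c / (real c + 1)^(P1 - P0 + 1)" for c
  proof -
    have "fe B n P0 False c = fe B n P1 True c / (real c + 1)^(P1-P0)"
      using fe_keep_seg[OF B0 lt(1) _ nB0] lt by simp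
    also have "fe B n P1 True c = Sm B n (Suc P1) c / (real c + 1)"
      using fe_drop_step[of P1 n B True] B1 lt by simp
    finally show ?thesis using ch[of c] by (simp add: field_simps)
  qed
  show ?thesis unfolding Sm_def[of B n P0] by (simp add: f0 field_simps)
qed

lemma nB_gen:
  fixes ii :: "nat \<Rightarrow> nat"
  assumes st: "\<And>j. j < r \<Longrightarrow> ii j < ii (Suc j)" and l: "l < r"
  shows "\<forall>t. ii l < t \<and> t < ii (Suc l) \<longrightarrow> t \<notin> ii ` {..<r}"
  using notin_B[where ii=ii and r=r, OF st l] by blast

lemma ii_le_n:
  fixes ii :: "nat \<Rightarrow> nat"
  assumes st: "\<And>j. j < r \<Longrightarrow> ii j < ii (Suc j)" and l: "l \<le> r"
  shows "ii l \<le> ii r"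
  using strict_ii[where ii=ii and r=r, OF st, of l r] l by (cases "l = r") auto

lemma Sm_pairs:
  fixes ii :: "nat \<Rightarrow> nat"
  assumes st: "\<And>j. j < r \<Longrightarrow> ii j < ii (Suc j)" and nr: "n = ii r" and kr: "2*k \<le> r"
    and hT: "\<And>a. Sm (ii ` {..<r}) n (ii (2*k)) a = Zr ts a"
  shows "d \<le> k \<Longrightarrow> Sm (ii ` {..<r}) n (ii (2*(k-d))) a =
    Zr (concat (map (\<lambda>j. (ii (2*j-1) - ii (2*j-2) + 1) # replicate (ii (2*j) - ii (2*j-1) - 1) 1) [k-d+1..<k+1]) @ ts) a"
proof (induction d arbitrary: a)
  case 0
  then show ?case using hT by simp
next
  case (Suc d)
  define j where "j = k - d"
  have j1: "1 \<le> j" "j \<le> k" using Suc.prems by (auto simp: j_def)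
  define B where "B = ii ` {..<r}"
  have e1: "2*j - 2 < r" "2*j - 1 < r" using j1 kr by auto
  have s1: "Suc (2*j-2) = 2*j-1" "Suc (2*j-1) = 2*j" using j1 by auto
  have B0: "ii (2*j-2) \<in> B" "ii (2*j-1) \<in> B" using e1 by (auto simp: B_def)
  have lt1: "ii (2*j-2) < ii (2*j-1)" using st[OF e1(1)] s1 by simp
  have lt2: "ii (2*j-1) < ii (2*j)" using st[OF e1(2)] s1 by simp
  have le3: "ii (2*j) \<le> n" using ii_le_n[where ii=ii and r=r, OF st, of "2*j"] j1 kr nr by simp
  have nB0: "\<forall>t. ii (2*j-2) < t \<and> t < ii (2*j-1) \<longrightarrow> t \<notin> B"
    using nB_gen[where ii=ii and r=r, OF st e1(1)] s1 by (simp add: B_def)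
  have nB1: "\<forall>t. ii (2*j-1) < t \<and> t < ii (2*j) \<longrightarrow> t \<notin> B"
    using nB_gen[where ii=ii and r=r, OF st e1(2)] s1 by (simp add: B_def)
  have IH: "\<And>a. Sm B n (ii (2*j)) a =
    Zr (concat (map (\<lambda>j. (ii (2*j-1) - ii (2*j-2) + 1) # replicate (ii (2*j) - ii (2*j-1) - 1) 1) [j+1..<k+1]) @ ts) a"
    using Suc.IH Suc.prems by (simp add: B_def j_def)
  have "Sm B n (ii (2*j-2)) a = Zr ((ii (2*j-1) - ii (2*j-2) + 1) # replicate (ii (2*j) - ii (2*j-1) - 1) 1 @
      (concat (map (\<lambda>j. (ii (2*j-1) - ii (2*j-2) + 1) # replicate (ii (2*j) - ii (2*j-1) - 1) 1) [j+1..<k+1]) @ ts)) a"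
    by (rule pair_seg[OF B0 lt1 lt2 le3 nB0 nB1 IH])
  moreover have "[j..<k+1] = j # [j+1..<k+1]" using j1 by (simp add: upt_conv_Cons)
  moreover have "2 * (k - Suc d) = 2*j - 2" "k - Suc d + 1 = j" using Suc.prems by (auto simp: j_def)
  ultimately show ?case by (simp add: B_def)
qed

lemma zs_conv:
  fixes i :: "nat \<Rightarrow> nat"
  shows "zs_blocks k i = concat (map (\<lambda>j. ((\<lambda>j. if j = 0 then 0 else i j) (2*j-1) - (\<lambda>j. if j = 0 then 0 else i j) (2*j-2) + 1)
     # replicate ((\<lambda>j. if j = 0 then 0 else i j) (2*j) - (\<lambda>j. if j = 0 then 0 else i j) (2*j-1) - 1) 1) [1..<k+1])"
  unfolding zs_blocks_def
  by (rule arg_cong[where f=concat], rule map_cong) auto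

lemma Sm_main:
  fixes i :: "nat \<Rightarrow> nat" and k r :: nat
  assumes k1: "1 \<le> k" and r: "r = 2*k \<or> r = 2*k+1" and i1: "1 \<le> i 1" and inc: "\<forall>j\<in>{1..<r}. i j < i (Suc j)"
  shows "Sm ((\<lambda>j. if j = 0 then 0 else i j) ` {..<r}) (i r) 0 a
     = Zr (zs_blocks k i @ (if r = 2*k then [] else [i (2*k+1) - i (2*k)])) a"
proof -
  define ii where "ii = (\<lambda>j. if j = 0 then 0 else i j)"
  define n where "n = i r"
  define B where "B = ii ` {..<r}"
  define ts where "ts = (if r = 2*k then [] else [i (2*k+1) - i (2*k)])"
  have st: "\<And>j. j < r \<Longrightarrow> ii j < ii (Suc j)"
    using i1 inc by (auto simp: ii_def)
  have nr: "n = ii r" using r k1 by (auto simp: ii_def n_def)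
  have kr: "2*k \<le> r" using r by auto
  have hT: "\<And>a. Sm B n (ii (2*k)) a = Zr ts a"
  proof (cases "r = 2*k")
    case True
    then have e: "ii (2*k) = n" using nr by simp
    show "Sm B n (ii (2*k)) a = Zr ts a" for a
      unfolding e Sm_def ts_def using True by (simp add: fe.simps[of B n n] sum.If_cases)
  next
    case False
    then have r1: "r = Suc (2*k)" using r by simp
    have B0: "ii (2*k) \<in> B" using r1 by (simp add: B_def)
    have lt: "ii (2*k) < n" using st[of "2*k"] r1 nr by simp
    have nB: "\<forall>t. ii (2*k) < t \<and> t < n \<longrightarrow> t \<notin> B"
      using nB_gen[where ii=ii and r=r, OF st, of "2*k"] r1 nr by (simp add: B_def)
    have fe1: "fe B n (ii (2*k)) False c = 1 / (real c + 1)^(n - ii (2*k))" for c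
      using fe_keep_seg[OF B0 lt order.refl nB] by (simp add: fe.simps[of B n n])
    have en: "n - ii (2*k) = i (2*k+1) - i (2*k)" using k1 r1 by (simp add: n_def ii_def)
    show "Sm B n (ii (2*k)) a = Zr ts a" for a
      unfolding Sm_def ts_def using False by (simp add: fe1 en)
  qed
  have "Sm B n (ii (2*(k-k))) a =
    Zr (concat (map (\<lambda>j. (ii (2*j-1) - ii (2*j-2) + 1) # replicate (ii (2*j) - ii (2*j-1) - 1) 1) [k-k+1..<k+1]) @ ts) a"
    unfolding B_def by (rule Sm_pairs[where ii=ii and r=r and d=k, OF st nr kr hT[unfolded B_def] order.refl])
  moreover have e: "2*(k-k) = 0" "k-k+1 = 1" by simp_all
  moreover have ii0: "ii 0 = 0" by (simp add: ii_def)
  ultimately have X: "Sm B n 0 a =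
    Zr (concat (map (\<lambda>j. (ii (2*j-1) - ii (2*j-2) + 1) # replicate (ii (2*j) - ii (2*j-1) - 1) 1) [1..<k+1]) @ ts) a"
    by (simp only:)
  show ?thesis using X unfolding B_def n_def ts_def zs_conv ii_def .
qed

lemma Zr_nonneg: "0 \<le> Zr ks a"
  by (induction ks arbitrary: a) (auto intro!: sum_nonneg)

lemma sqrt_step1: "1 / sqrt (real a + 2) \<le> 2 * sqrt (real a + 2) - 2 * sqrt (real a + 1)"
proof -
  define u where "u = sqrt (real a + 1)"
  define v where "v = sqrt (real a + 2)"
  have u0: "0 < u" and uv: "u < v" by (auto simp: u_def v_def)
  have sq: "v^2 - u^2 = 1" by (simp add: u_def v_def)
  have "v - u = 1 / (v + u)" using sq u0 uv by (simp add: field_simps power2_eq_square)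
  moreover have "1 / v \<le> 2 / (v + u)" using u0 uv by (simp add: field_simps)
  ultimately have "1 / v \<le> 2 * (v - u)" by simp
  then show ?thesis by (simp add: u_def v_def algebra_simps)
qed

lemma sqrt_sum1: "(\<Sum>c\<le>a. 1 / sqrt (real c + 1)) \<le> 2 * sqrt (real a + 1)"
proof (induction a)
  case 0 then show ?case by simp
next
  case (Suc a)
  have "(\<Sum>c\<le>Suc a. 1 / sqrt (real c + 1)) = (\<Sum>c\<le>a. 1 / sqrt (real c + 1)) + 1 / sqrt (real a + 2)"
    by (simp add: add.commute)
  also have "\<dots> \<le> 2 * sqrt (real a + 1) + (2 * sqrt (real a + 2) - 2 * sqrt (real a + 1))"
    using Suc sqrt_step1[of a] by linarith
  finally show ?case by (simp add: add.commute)
qed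

lemma sqrt_step2: "1 / ((real a + 2) * sqrt (real a + 2)) \<le> 2 / sqrt (real a + 1) - 2 / sqrt (real a + 2)"
proof -
  define u where "u = sqrt (real a + 1)"
  define v where "v = sqrt (real a + 2)"
  have u0: "0 < u" and uv: "u < v" by (auto simp: u_def v_def)
  have sq: "v^2 - u^2 = 1" by (simp add: u_def v_def)
  have vv: "v * v = real a + 2" by (simp add: v_def)
  have "2 / u - 2 / v = 2 * (v - u) / (u * v)" using u0 uv by (simp add: field_simps)
  also have "v - u = 1 / (v + u)" using sq u0 uv by (simp add: field_simps power2_eq_square)
  finally have e: "2 / u - 2 / v = 2 / (u * v * (v + u))" using u0 uv by (simp add: field_simps)
  have "u * v * (v + u) \<le> v * v * (2 * v)"
  proof -
    have "u * v \<le> v * v" using u0 uv by (intro mult_right_mono) auto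
    moreover have "v + u \<le> 2 * v" using uv by simp
    ultimately show ?thesis using u0 uv by (intro mult_mono) auto
  qed
  then have X: "u * v * (v + u) \<le> 2 * (v * v * v)" by (simp add: algebra_simps)
  have Xp: "0 < u * v * (v + u)" using u0 uv by simp
  have "2 / (2 * (v * v * v)) \<le> 2 / (u * v * (v + u))"
    using X Xp by (intro divide_left_mono) auto
  then have "1 / (v * v * v) \<le> 2 / (u * v * (v + u))" by simp
  then have "1 / (v * v * v) \<le> 2 / u - 2 / v" using e by simp
  then show ?thesis by (simp add: u_def v_def vv mult.assoc[symmetric])
qed

lemma sqrt_sum2: "(\<Sum>c\<le>a. 1 / ((real c + 1) * sqrt (real c + 1))) \<le> 3 - 2 / sqrt (real a + 1)"
proof (induction a)
  case 0 then show ?case by simp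
next
  case (Suc a)
  have "(\<Sum>c\<le>Suc a. 1 / ((real c + 1) * sqrt (real c + 1))) = (\<Sum>c\<le>a. 1 / ((real c + 1) * sqrt (real c + 1))) + 1 / ((real a + 2) * sqrt (real a + 2))"
    by (simp add: add.commute)
  also have "\<dots> \<le> 3 - 2 / sqrt (real a + 1) + (2 / sqrt (real a + 1) - 2 / sqrt (real a + 2))"
    using Suc sqrt_step2[of a] by linarith
  finally show ?case by (simp add: add.commute)
qed

lemma Zr_bound1: "(\<forall>x\<in>set ks. 1 \<le> x) \<Longrightarrow> Zr ks a \<le> 2 ^ length ks * sqrt (real a + 1)"
proof (induction ks arbitrary: a)
  case Nil then show ?case by simp
next
  case (Cons k ks)
  have "Zr (k#ks) a = (\<Sum>c\<le>a. (1 / (real c + 1) ^ k) * Zr ks c)" by simp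
  also have "\<dots> \<le> (\<Sum>c\<le>a. 2 ^ length ks * (1 / sqrt (real c + 1)))"
  proof (rule sum_mono)
    fix c assume "c \<in> {..a}"
    have k1: "1 \<le> k" using Cons.prems by simp
    have a1: "1 / (real c + 1) ^ k \<le> 1 / (real c + 1)"
    proof -
      have "(real c + 1) ^ 1 \<le> (real c + 1) ^ k" using k1 by (intro power_increasing) auto
      then show ?thesis by (intro divide_left_mono) auto
    qed
    have a2: "Zr ks c \<le> 2 ^ length ks * sqrt (real c + 1)" using Cons by simp
    have "(1 / (real c + 1) ^ k) * Zr ks c \<le> (1 / (real c + 1)) * (2 ^ length ks * sqrt (real c + 1))"
      using a1 a2 Zr_nonneg[of ks c] by (intro mult_mono) auto
    also have "\<dots> = 2 ^ length ks * (1 / sqrt (real c + 1))"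
    proof -
      define s where "s = sqrt (real c + 1)"
      have s0: "s > 0" by (simp add: s_def)
      have cs: "real c + 1 = s * s" by (simp add: s_def)
      show ?thesis unfolding s_def[symmetric] cs using s0 by (simp add: field_simps)
    qed
    finally show "(1 / (real c + 1) ^ k) * Zr ks c \<le> 2 ^ length ks * (1 / sqrt (real c + 1))" .
  qed
  also have "\<dots> = 2 ^ length ks * (\<Sum>c\<le>a. 1 / sqrt (real c + 1))" by (simp add: sum_distrib_left)
  also have "\<dots> \<le> 2 ^ length ks * (2 * sqrt (real a + 1))" using sqrt_sum1[of a] by simp
  finally show ?case by simp
qed

lemma Zr_bound2:
  assumes "2 \<le> k" "\<forall>x\<in>set ks. 1 \<le> x"
  shows "Zr (k#ks) a \<le> 3 * 2 ^ length ks"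
proof -
  have "Zr (k#ks) a = (\<Sum>c\<le>a. (1 / (real c + 1) ^ k) * Zr ks c)" by simp
  also have "\<dots> \<le> (\<Sum>c\<le>a. 2 ^ length ks * (1 / ((real c + 1) * sqrt (real c + 1))))"
  proof (rule sum_mono)
    fix c assume "c \<in> {..a}"
    have a1: "1 / (real c + 1) ^ k \<le> 1 / (real c + 1)^2"
    proof -
      have "(real c + 1) ^ 2 \<le> (real c + 1) ^ k" using assms(1) by (intro power_increasing) auto
      then show ?thesis by (intro divide_left_mono) auto
    qed
    have a2: "Zr ks c \<le> 2 ^ length ks * sqrt (real c + 1)" using Zr_bound1 assms(2) by simp
    have "(1 / (real c + 1) ^ k) * Zr ks c \<le> (1 / (real c + 1)^2) * (2 ^ length ks * sqrt (real c + 1))"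
      using a1 a2 Zr_nonneg[of ks c] by (intro mult_mono) auto
    also have "\<dots> = 2 ^ length ks * (1 / ((real c + 1) * sqrt (real c + 1)))"
    proof -
      define s where "s = sqrt (real c + 1)"
      have s0: "s > 0" by (simp add: s_def)
      have cs: "real c + 1 = s * s" by (simp add: s_def)
      show ?thesis unfolding s_def[symmetric] cs using s0 by (simp add: field_simps power2_eq_square)
    qed
    finally show "(1 / (real c + 1) ^ k) * Zr ks c \<le> 2 ^ length ks * (1 / ((real c + 1) * sqrt (real c + 1)))" .
  qed
  also have "\<dots> = 2 ^ length ks * (\<Sum>c\<le>a. 1 / ((real c + 1) * sqrt (real c + 1)))" by (simp add: sum_distrib_left)
  also have "\<dots> \<le> 2 ^ length ks * 3"
  proof -
    have "(\<Sum>c\<le>a. 1 / ((real c + 1) * sqrt (real c + 1))) \<le> 3"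
      using sqrt_sum2[of a] by (smt (verit) divide_nonneg_nonneg real_sqrt_ge_zero of_nat_0_le_iff)
    then show ?thesis by simp
  qed
  finally show ?thesis by simp
qed

definition LS :: "nat list \<Rightarrow> nat \<Rightarrow> nat list set" where
  "LS ks a = {ns. length ns = length ks \<and> sorted_wrt (\<ge>) ns \<and> (\<forall>n\<in>set ns. 1 \<le> n) \<and> (\<forall>n\<in>set ns. n \<le> a+1)}"

definition tm :: "nat list \<Rightarrow> nat list \<Rightarrow> real" where
  "tm ks ns = (\<Prod>j<length ks. 1 / real (ns ! j) ^ (ks ! j))"

lemma LS_Nil: "LS [] a = {[]}" by (auto simp: LS_def)

lemma LS_Cons: "LS (k#ks) a = (\<lambda>(c,ns). Suc c # ns) ` (SIGMA c:{..a}. LS ks c)"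
proof (intro equalityI subsetI)
  fix ns assume "ns \<in> LS (k#ks) a"
  then obtain n ns' where ns: "ns = n # ns'" and h: "length ns' = length ks" "sorted_wrt (\<ge>) ns'"
    "\<forall>x\<in>set ns'. x \<le> n" "1 \<le> n" "n \<le> a+1" "\<forall>x\<in>set ns'. 1 \<le> x"
    by (cases ns) (auto simp: LS_def)
  have "ns' \<in> LS ks (n - 1)" using h by (auto simp: LS_def)
  moreover have "n - 1 \<in> {..a}" using h by auto
  moreover have "ns = Suc (n-1) # ns'" using ns h by simp
  ultimately show "ns \<in> (\<lambda>(c,ns). Suc c # ns) ` (SIGMA c:{..a}. LS ks c)" by force
next
  fix ns assume "ns \<in> (\<lambda>(c,ns). Suc c # ns) ` (SIGMA c:{..a}. LS ks c)"
  then obtain c ns' where "ns = Suc c # ns'" "c \<le> a" "ns' \<in> LS ks c" by auto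
  then show "ns \<in> LS (k#ks) a" by (auto simp: LS_def)
qed

lemma LS_finite: "finite (LS ks a)"
  by (induction ks arbitrary: a) (auto simp: LS_Nil LS_Cons)

lemma tm_Cons: "length ns = length ks \<Longrightarrow> tm (k#ks) (Suc c # ns) = 1 / (real c + 1) ^ k * tm ks ns"
  unfolding tm_def length_Cons prod.lessThan_Suc_shift by (simp add: add.commute)

lemma tm_nonneg: "0 \<le> tm ks ns"
  unfolding tm_def by (intro prod_nonneg) auto

lemma LS_sum: "(\<Sum>ns\<in>LS ks a. tm ks ns) = Zr ks a"
proof (induction ks arbitrary: a)
  case Nil
  then show ?case by (simp add: LS_Nil tm_def)
next
  case (Cons k ks)
  have inj: "inj_on (\<lambda>(c,ns). Suc c # ns) (SIGMA c:{..a}. LS ks c)"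
    by (auto simp: inj_on_def)
  have "(\<Sum>ns\<in>LS (k#ks) a. tm (k#ks) ns) = (\<Sum>(c,ns)\<in>(SIGMA c:{..a}. LS ks c). tm (k#ks) (Suc c # ns))"
    unfolding LS_Cons by (subst sum.reindex[OF inj]) (simp add: case_prod_unfold)
  also have "\<dots> = (\<Sum>c\<le>a. \<Sum>ns\<in>LS ks c. tm (k#ks) (Suc c # ns))"
    by (rule sum.Sigma[symmetric]) (auto simp: LS_finite)
  also have "\<dots> = (\<Sum>c\<le>a. \<Sum>ns\<in>LS ks c. 1 / (real c + 1) ^ k * tm ks ns)"
    by (intro sum.cong refl) (simp add: tm_Cons LS_def)
  also have "\<dots> = Zr (k#ks) a"
    by (simp add: sum_divide_distrib[symmetric] Cons.IH)
  finally show ?case .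
qed

lemma zeta_SUP:
  assumes bnd: "\<And>a. Zr ks a \<le> C"
  shows "ennreal (zeta_star ks) = (SUP a. ennreal (Zr ks a))"
proof -
  define S where "S = {ns :: nat list. length ns = length ks \<and> sorted_wrt (\<ge>) ns \<and> (\<forall>n\<in>set ns. 1 \<le> n)}"
  have zs: "zeta_star ks = infsum (tm ks) S" unfolding zeta_star_def S_def tm_def ..
  have LS_S: "LS ks a \<subseteq> S" for a by (auto simp: LS_def S_def)
  have cover: "\<exists>a. F \<subseteq> LS ks a" if F: "finite F" "F \<subseteq> S" for F
  proof -
    have "finite (\<Union>ns\<in>F. set ns)" using F by auto
    then obtain b where b: "\<forall>x\<in>(\<Union>ns\<in>F. set ns). x \<le> b" using finite_nat_set_iff_bounded_le by blast
    have "F \<subseteq> LS ks b"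
    proof
      fix ns assume ns: "ns \<in> F"
      then have "ns \<in> S" using F by auto
      moreover have "\<forall>n\<in>set ns. n \<le> b + 1" using b ns by fastforce
      ultimately show "ns \<in> LS ks b" by (simp add: LS_def S_def)
    qed
    then show ?thesis by blast
  qed
  have Fle: "sum (tm ks) F \<le> Zr ks a" if "F \<subseteq> LS ks a" for F a
  proof -
    have "sum (tm ks) F \<le> sum (tm ks) (LS ks a)"
      using that by (intro sum_mono2 LS_finite tm_nonneg)
    then show ?thesis by (simp add: LS_sum)
  qed
  have summ: "tm ks summable_on S"
  proof (rule nonneg_bdd_above_summable_on)
    show "\<And>x. x \<in> S \<Longrightarrow> 0 \<le> tm ks x" by (rule tm_nonneg)
    show "bdd_above (sum (tm ks) ` {F. F \<subseteq> S \<and> finite F})"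
    proof (rule bdd_aboveI)
      fix y assume "y \<in> sum (tm ks) ` {F. F \<subseteq> S \<and> finite F}"
      then obtain F where F: "F \<subseteq> S" "finite F" "y = sum (tm ks) F" by auto
      obtain a where "F \<subseteq> LS ks a" using cover F by blast
      then show "y \<le> C" using Fle bnd F order_trans by blast
    qed
  qed
  have "ennreal (zeta_star ks) = (SUP F\<in>{F. finite F \<and> F \<subseteq> S}. ennreal (sum (tm ks) F))"
    unfolding zs by (rule infsum_nonneg_is_SUPREMUM_ennreal[OF summ tm_nonneg])
  also have "\<dots> = (SUP a. ennreal (Zr ks a))"
  proof (rule antisym)
    show "(SUP F\<in>{F. finite F \<and> F \<subseteq> S}. ennreal (sum (tm ks) F)) \<le> (SUP a. ennreal (Zr ks a))"
    proof (rule SUP_least)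
      fix F assume "F \<in> {F. finite F \<and> F \<subseteq> S}"
      then obtain a where a: "F \<subseteq> LS ks a" using cover by blast
      have "ennreal (sum (tm ks) F) \<le> ennreal (Zr ks a)" using Fle[OF a] by (rule ennreal_leI)
      also have "\<dots> \<le> (SUP a. ennreal (Zr ks a))" by (rule SUP_upper) simp
      finally show "ennreal (sum (tm ks) F) \<le> (SUP a. ennreal (Zr ks a))" .
    qed
    show "(SUP a. ennreal (Zr ks a)) \<le> (SUP F\<in>{F. finite F \<and> F \<subseteq> S}. ennreal (sum (tm ks) F))"
    proof (rule SUP_least)
      fix a :: nat
      have "ennreal (Zr ks a) = ennreal (sum (tm ks) (LS ks a))" by (simp add: LS_sum)
      also have "\<dots> \<le> (SUP F\<in>{F. finite F \<and> F \<subseteq> S}. ennreal (sum (tm ks) F))"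
        by (rule SUP_upper) (simp add: LS_finite LS_S)
      finally show "ennreal (Zr ks a) \<le> (SUP F\<in>{F. finite F \<and> F \<subseteq> S}. ennreal (sum (tm ks) F))" .
    qed
  qed
  finally show ?thesis .
qed

lemma main_part:
  fixes i :: "nat \<Rightarrow> nat" and k r :: nat
  assumes k1: "1 \<le> k" and r: "r = 2*k \<or> r = 2*k+1" and i1: "1 \<le> i 1" and inc: "\<forall>j\<in>{1..<r}. i j < i (Suc j)"
  shows "cube_integral r i = ennreal (zeta_star (zs_blocks k i @ (if r = 2*k then [] else [i (2*k+1) - i (2*k)])))"
proof -
  define ks where "ks = zs_blocks k i @ (if r = 2*k then [] else [i (2*k+1) - i (2*k)])"
  define B where "B = (\<lambda>j. if j = 0 then 0 else i j) ` {..<r}"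
  define n where "n = i r"
  have r1: "1 \<le> r" using r k1 by auto
  have SmZ: "(\<Sum>c\<le>a. fe B n 0 False c) = Zr ks a" for a
    using Sm_main[OF k1 r i1 inc, of a] by (simp add: Sm_def B_def n_def ks_def)
  define rest where "rest = replicate (i 2 - i 1 - 1) 1 @
     concat (map (\<lambda>j. (i (2*j-1) - (if 2*j-2 = 0 then 0 else i (2*j-2)) + 1)
       # replicate (i (2*j) - i (2*j-1) - 1) 1) [Suc 1..<k+1]) @ (if r = 2*k then [] else [i (2*k+1) - i (2*k)])"
  have u: "[1..<k+1] = 1 # [Suc 1..<k+1]" by (rule upt_conv_Cons) (use k1 in simp)
  have zb: "zs_blocks k i = ((i (2*1-1) - (if (2::nat)*1-2 = 0 then 0 else i (2*1-2)) + 1) # replicate (i (2*1) - i (2*1-1) - 1) 1) @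
     concat (map (\<lambda>j. (i (2*j-1) - (if 2*j-2 = 0 then 0 else i (2*j-2)) + 1)
       # replicate (i (2*j) - i (2*j-1) - 1) 1) [Suc 1..<k+1])"
    unfolding zs_blocks_def u by (simp only: list.map(2) concat.simps(2))
  have e1: "(i (2*1-1) - (if (2::nat)*1-2 = 0 then 0 else i (2*1-2)) + 1) = i 1 + 1" by simp
  have e2: "i (2*1) - i (2*1-1) - 1 = i 2 - i 1 - 1" by simp
  have ksr: "ks = (i 1 + 1) # rest"
    unfolding ks_def rest_def zb e1 e2 by simp
  have tail1: "r \<noteq> 2*k \<Longrightarrow> 1 \<le> i (2*k+1) - i (2*k)"
  proof -
    assume "r \<noteq> 2*k"
    then have "r = 2*k+1" using r by simp
    then have "i (2*k) < i (Suc (2*k))" using inc k1 by auto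
    then show ?thesis by simp
  qed
  have restpos: "\<forall>x\<in>set rest. 1 \<le> x"
    using tail1 by (auto simp: rest_def)
  have bnd: "Zr ks a \<le> 3 * 2 ^ length rest" for a
    unfolding ksr by (rule Zr_bound2) (use i1 restpos in auto)
  define S where "S = (\<Sum>a. ennreal (fe B n 0 False a))"
  have S_SUP: "S = (SUP a. ennreal (Zr ks a))"
  proof -
    have ps: "(\<Sum>c<Suc a. ennreal (fe B n 0 False c)) = ennreal (Zr ks a)" for a
      by (simp add: lessThan_Suc_atMost fe_nonneg SmZ[symmetric])
    have "S = (SUP m. \<Sum>c<m. ennreal (fe B n 0 False c))" unfolding S_def by (rule suminf_eq_SUP)
    also have "\<dots> = (SUP a. ennreal (Zr ks a))"
    proof (rule antisym)
      show "(SUP m. \<Sum>c<m. ennreal (fe B n 0 False c)) \<le> (SUP a. ennreal (Zr ks a))"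
      proof (rule SUP_least)
        fix m :: nat
        have "(\<Sum>c<m. ennreal (fe B n 0 False c)) \<le> (\<Sum>c<Suc m. ennreal (fe B n 0 False c))"
          by (rule sum_mono2) auto
        also have "\<dots> = ennreal (Zr ks m)" by (rule ps)
        also have "\<dots> \<le> (SUP a. ennreal (Zr ks a))" by (rule SUP_upper) simp
        finally show "(\<Sum>c<m. ennreal (fe B n 0 False c)) \<le> (SUP a. ennreal (Zr ks a))" .
      qed
      show "(SUP a. ennreal (Zr ks a)) \<le> (SUP m. \<Sum>c<m. ennreal (fe B n 0 False c))"
      proof (rule SUP_least)
        fix a :: nat
        have "ennreal (Zr ks a) = (\<Sum>c<Suc a. ennreal (fe B n 0 False c))" by (rule ps[symmetric])
        also have "\<dots> \<le> (SUP m. \<Sum>c<m. ennreal (fe B n 0 False c))" by (rule SUP_upper) simp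
        finally show "ennreal (Zr ks a) \<le> (SUP m. \<Sum>c<m. ennreal (fe B n 0 False c))" .
      qed
    qed
    finally show ?thesis .
  qed
  have Sfin: "S \<noteq> \<infinity>"
  proof -
    have "S \<le> ennreal (3 * 2 ^ length rest)"
      unfolding S_SUP by (rule SUP_least) (rule ennreal_leI[OF bnd])
    then show ?thesis unfolding infinity_ennreal_def by (rule neq_top_trans[OF ennreal_neq_top])
  qed
  have "cube_integral r i = S"
    unfolding S_def B_def n_def by (rule cube_series[OF r1 i1 inc]) (use Sfin in \<open>unfold S_def B_def n_def\<close>)
  also have "\<dots> = ennreal (zeta_star ks)" unfolding S_SUP by (rule zeta_SUP[OF bnd, symmetric])
  finally show ?thesis by (simp add: ks_def)
qed

theorem theorem1p1:
  fixes k :: nat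
  assumes "1 \<le> k"
  shows "(\<forall>i :: nat \<Rightarrow> nat. 1 \<le> i 1 \<and> (\<forall>j\<in>{1..<2*k+1}. i j < i (Suc j)) \<longrightarrow>
            cube_integral (2*k+1) i
              = ennreal (zeta_star (zs_blocks k i @ [i (2*k+1) - i (2*k)])))
       \<and> (\<forall>i :: nat \<Rightarrow> nat. 1 \<le> i 1 \<and> (\<forall>j\<in>{1..<2*k}. i j < i (Suc j)) \<longrightarrow>
            cube_integral (2*k) i = ennreal (zeta_star (zs_blocks k i)))"
proof (intro conjI allI impI)
  fix i :: "nat \<Rightarrow> nat"
  assume h: "1 \<le> i 1 \<and> (\<forall>j\<in>{1..<2*k+1}. i j < i (Suc j))"
  show "cube_integral (2*k+1) i = ennreal (zeta_star (zs_blocks k i @ [i (2*k+1) - i (2*k)]))"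
    using main_part[of k "2*k+1" i] assms h by simp
next
  fix i :: "nat \<Rightarrow> nat"
  assume h: "1 \<le> i 1 \<and> (\<forall>j\<in>{1..<2*k}. i j < i (Suc j))"
  show "cube_integral (2*k) i = ennreal (zeta_star (zs_blocks k i))"
    using main_part[of k "2*k" i] assms h by simp
qed

end
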